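(* Let $q(t)=t^2\log(t^2)$ for $t>0$ and, for an integer $k\ge2$, let $p^{2k-1}_{\mathrm{Tay}}$ be the Taylor polynomial of $q$ of order $2k-1$ about $t=1$. Then $p^{2k-1}_{\mathrm{Tay}}(t)\ge q(t)$ for all $t>0$. *)

theory Defs
  imports "HOL-Analysis.Analysis"
begin

definition q :: "real \<Rightarrow> real" where
  "q t = t\<^sup>2 * ln (t\<^sup>2)"

definition taylor_poly :: "(real \<Rightarrow> real) \<Rightarrow> nat \<Rightarrow> real \<Rightarrow> real \<Rightarrow> real" where
  "taylor_poly f n a t = (\<Sum>j\<le>n. (deriv ^^ j) f a / fact j * (t - a) ^ j)"

end

theory Submission
  imports Defs
begin

definition d :: "nat \<Rightarrow> real \<Rightarrow> real" where
  "d m x = (if m = 0 then 2*x^2*ln x else if m = 1 then 4*x*ln x + 2*x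
     else if m = 2 then 4*ln x + 6 else 4*(-1)^(m-1)*fact(m-3)/x^(m-2))"

lemma d_deriv:
  assumes x: "x > 0"
  shows "(d m has_real_derivative d (Suc m) x) (at x)"
proof -
  consider "m = 0" | "m = 1" | "m = 2" | "m \<ge> 3" by linarith
  then show ?thesis
  proof cases
    case 1
    have "((\<lambda>x. 2*x^2*ln x) has_real_derivative 2*(2*x)*ln x + 2*x^2*(1/x)) (at x)"
      using x by (auto intro!: derivative_eq_intros)
    moreover have "2*(2*x)*ln x + 2*x^2*(1/x) = d (Suc m) x" using 1 x
      by (simp add: d_def power2_eq_square)
    moreover have "d m = (\<lambda>x. 2*x^2*ln x)" using 1 by (auto simp: d_def fun_eq_iff)
    ultimately show ?thesis by simp
  next
    case 2
    have "((\<lambda>x. 4*x*ln x + 2*x) has_real_derivative 4*ln x + 4*x*(1/x) + 2) (at x)"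
      using x by (auto intro!: derivative_eq_intros)
    moreover have "4*ln x + 4*x*(1/x) + 2 = d (Suc m) x" using 2 x
      by (simp add: d_def)
    moreover have "d m = (\<lambda>x. 4*x*ln x + 2*x)" using 2 by (auto simp: d_def fun_eq_iff)
    ultimately show ?thesis by simp
  next
    case 3
    have "((\<lambda>x. 4*ln x + 6) has_real_derivative 4*(1/x)) (at x)"
      using x by (auto intro!: derivative_eq_intros)
    moreover have "4*(1/x) = d (Suc m) x" using 3 x
      by (simp add: d_def)
    moreover have "d m = (\<lambda>x. 4*ln x + 6)" using 3 by (auto simp: d_def fun_eq_iff)
    ultimately show ?thesis by simp
  next
    case 4
    define c :: real where "c = 4*(-1)^(m-1)*fact(m-3)"
    define r where "r = m - 2"
    have r: "r \<ge> 1" "m = r + 2" using 4 by (auto simp: r_def)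
    have dm: "d m = (\<lambda>x. c * inverse (x^r))" using 4 by (auto simp: d_def fun_eq_iff c_def r_def divide_inverse)
    have "((\<lambda>x. c * inverse (x^r)) has_real_derivative c * (- (inverse (x^r) * (real r * x^(r-1)) * inverse (x^r)))) (at x)"
      using x by (auto intro!: derivative_eq_intros)
    moreover have "c * (- (inverse (x^r) * (real r * x^(r-1)) * inverse (x^r))) = d (Suc m) x"
    proof -
      have f: "fact (Suc m - 3) = real r * fact (m-3)" using r
        by (simp add: fact_reduce[of "r"] Suc_diff_le) 
      have p: "x^r * x^r = x^(r-1) * x^(Suc m - 2)" using r
        by (simp add: power_add[symmetric] power_Suc[symmetric] del: power_Suc)
      have "d (Suc m) x = 4*(-1)^m*fact(Suc m-3)/x^(Suc m-2)" using 4 by (simp add: d_def)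
      also have "\<dots> = - c * real r * x^(r-1) / (x^r*x^r)" unfolding c_def f p
        using x r by (cases m) (auto simp: field_simps)
      finally show ?thesis using x by (simp add: field_simps)
    qed
    ultimately show ?thesis using dm by simp
  qed
qed

lemma iter_deriv: "x > 0 \<Longrightarrow> (deriv ^^ m) q x = d m x"
proof (induction m arbitrary: x)
  case 0
  then show ?case by (simp add: q_def d_def ln_mult power2_eq_square)
next
  case (Suc m)
  have "((deriv ^^ m) q has_real_derivative d (Suc m) x) (at x)"
    apply (rule has_field_derivative_transform_within_open[where f="d m" and S="{0<..}"])
    using Suc d_deriv by auto
  then show ?case by (simp add: DERIV_imp_deriv)
qed

theorem mainTheorem11:
  fixes k :: nat and t :: real
  assumes "k \<ge> 2" and "t > 0"
  shows "taylor_poly q (2 * k - 1) 1 t \<ge> q t"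
proof (cases "t = 1")
  case True
  have "taylor_poly q (2 * k - 1) 1 t = (deriv ^^ 0) q 1"
    unfolding taylor_poly_def True by (simp add: sum.atMost_shift)
  then show ?thesis using True by (simp add: q_def)
next
  case False
  have tp: "taylor_poly q (2 * k - 1) 1 t = (\<Sum>j<2*k. d j 1 / fact j * (t - 1) ^ j)"
    unfolding taylor_poly_def using assms(1)
    by (intro sum.cong) (auto simp: iter_deriv)
  obtain \<xi> where xi: "(if t < 1 then (t < \<xi> \<and> \<xi> < 1) else (1 < \<xi> \<and> \<xi> < t))"
    "d 0 t = (\<Sum>m<2*k. d m 1 / fact m * (t - 1) ^ m) + d (2*k) \<xi> / fact (2*k) * (t - 1) ^ (2*k)"
    using Taylor[of "2*k" d "d 0" "min t 1" "max t 1" 1 t] assms False d_deriv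
    by fastforce
  have xpos: "\<xi> > 0" using xi(1) assms(2) by (auto split: if_splits)
  have "d (2*k) \<xi> = 4*(-1)^(2*k-1)*fact(2*k-3)/\<xi>^(2*k-2)" using assms(1) by (simp add: d_def)
  also have "\<dots> = - 4*fact(2*k-3)/\<xi>^(2*k-2)"
  proof -
    have "odd (2*k-1)" using assms(1) by simp
    then have "(-1::real)^(2*k-1) = -1" by simp
    then show ?thesis by simp
  qed
  finally have "d (2*k) \<xi> \<le> 0" using xpos by simp
  moreover have "(t-1)^(2*k) \<ge> 0" by (simp add: power_mult zero_le_power2 [unfolded power2_eq_square] zero_le_even_power)
  ultimately have "d (2*k) \<xi> / fact (2*k) * (t - 1) ^ (2*k) \<le> 0"
    by (simp add: mult_nonpos_nonneg divide_nonpos_pos)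
  moreover have "q t = d 0 t" using iter_deriv[of t 0] assms(2) by simp
  ultimately show ?thesis using xi(2) tp by linarith
qed

end
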